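(* Let $H$ be a real Hilbert space, $\mathcal{I}$ a finite index set, $J,g_i:H\to\mathbb{R}$ ($i\in\mathcal{I}$) $\mathcal{C}^1$ functions, $\Omega=\{u\in H: g_i(u)\le 0\ \forall i\in\mathcal{I}\}$, and assume that for every $u\in\Omega$ with $I_A(u)\ne\emptyset$ the vectors $\{g_i'(u): i\in I_A(u)\}$ are linearly independent. Suppose $u\in\Omega$ is not a KKT point of the problem of minimizing $J$ over $\Omega$, and let $u(t)=u+t\,d_W(u)+\sum_{i\in I_W(u)}c_i(t)g_i'(u)$, where the functions $c_i$ ($i\in I_W(u)$), defined for small $t>0$, are such that $u(t)\in\Omega$, $g_i(u(t))=0$ for all $i\in I_W(u)$, $c_i(t)=o(t)$ for all $i\in I_W(u)$, and $\|\sum_{i\in I_W(u)}c_i(t)g_i'(u)\|=o(t)$ as $t\to0^+$. Then there exists $t_0>0$ depending on $u$ such that $$J(u(t))-J(u)<-\frac{t}{2}\|d_W(u)\|^2\quad\text{for all } 0<t<t_0.$$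
   Context: $J'(u)$, $g_i'(u)$ denote gradients in $H$; $\mathbb{P}_C$ is the metric projection onto a closed convex set $C$. For $u\in\Omega$: $I_A(u)=\{i\in\mathcal{I}: g_i(u)=0\}$; $C_A(u)=\{\sum_{i\in I_A(u)}a_ig_i'(u): a_i\ge0\}$ ($=\{0\}$ if empty); $d_A(u)=-J'(u)-\mathbb{P}_{C_A(u)}(-J'(u))$; $I_W(u)=\{i\in I_A(u): \langle g_i'(u), d_A(u)\rangle=0\}$; $C_W(u)=\{\sum_{i\in I_W(u)}a_ig_i'(u): a_i\ge 0\}$ ($=\{0\}$ if empty); $d_W(u)=-J'(u)-\mathbb{P}_{C_W(u)}(-J'(u))$. A point $u\in\Omega$ is a KKT point if there exist $\mu_i\ge0$ with $-J'(u)=\sum_{i\in\mathcal{I}}\mu_i g_i'(u)$ and $\mu_i g_i(u)=0$ for all $i$. (Such functions $c_i$ exist for non-KKT $u$.) *)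

theory Defs
  imports "HOL-Analysis.Analysis"
begin

definition metric_proj :: "'a::real_inner set \<Rightarrow> 'a \<Rightarrow> 'a" where
  "metric_proj C x = (THE p. p \<in> C \<and> (\<forall>y\<in>C. dist x p \<le> dist x y))"

definition gen_cone :: "'i set \<Rightarrow> ('i \<Rightarrow> 'a::real_vector) \<Rightarrow> 'a set" where
  "gen_cone K v = {(\<Sum>i\<in>K. a i *\<^sub>R v i) | a. \<forall>i\<in>K. a i \<ge> 0}"

definition feasible_set :: "'i set \<Rightarrow> ('i \<Rightarrow> 'a \<Rightarrow> real) \<Rightarrow> 'a set" where
  "feasible_set I g = {u. \<forall>i\<in>I. g i u \<le> 0}"

definition active_set :: "'i set \<Rightarrow> ('i \<Rightarrow> 'a \<Rightarrow> real) \<Rightarrow> 'a \<Rightarrow> 'i set" where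
  "active_set I g u = {i\<in>I. g i u = 0}"

text \<open>d_A(u); dJ is the gradient of J, dg i the gradient of g i.\<close>
definition dir_A :: "'i set \<Rightarrow> ('a::real_inner \<Rightarrow> 'a) \<Rightarrow> ('i \<Rightarrow> 'a \<Rightarrow> real) \<Rightarrow> ('i \<Rightarrow> 'a \<Rightarrow> 'a) \<Rightarrow> 'a \<Rightarrow> 'a" where
  "dir_A I dJ g dg u =
     - dJ u - metric_proj (gen_cone (active_set I g u) (\<lambda>i. dg i u)) (- dJ u)"

definition weak_active_set :: "'i set \<Rightarrow> ('a::real_inner \<Rightarrow> 'a) \<Rightarrow> ('i \<Rightarrow> 'a \<Rightarrow> real) \<Rightarrow> ('i \<Rightarrow> 'a \<Rightarrow> 'a) \<Rightarrow> 'a \<Rightarrow> 'i set" where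
  "weak_active_set I dJ g dg u =
     {i \<in> active_set I g u. inner (dg i u) (dir_A I dJ g dg u) = 0}"

definition dir_W :: "'i set \<Rightarrow> ('a::real_inner \<Rightarrow> 'a) \<Rightarrow> ('i \<Rightarrow> 'a \<Rightarrow> real) \<Rightarrow> ('i \<Rightarrow> 'a \<Rightarrow> 'a) \<Rightarrow> 'a \<Rightarrow> 'a" where
  "dir_W I dJ g dg u =
     - dJ u - metric_proj (gen_cone (weak_active_set I dJ g dg u) (\<lambda>i. dg i u)) (- dJ u)"

definition is_KKT :: "'i set \<Rightarrow> ('a::real_inner \<Rightarrow> 'a) \<Rightarrow> ('i \<Rightarrow> 'a \<Rightarrow> real) \<Rightarrow> ('i \<Rightarrow> 'a \<Rightarrow> 'a) \<Rightarrow> 'a \<Rightarrow> bool" where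
  "is_KKT I dJ g dg u \<longleftrightarrow> u \<in> feasible_set I g \<and>
     (\<exists>\<mu>. (\<forall>i\<in>I. \<mu> i \<ge> 0 \<and> \<mu> i * g i u = 0) \<and> - dJ u = (\<Sum>i\<in>I. \<mu> i *\<^sub>R dg i u))"

end

theory Submission
  imports Defs
begin

lemma closed_sum_line:
  fixes W S :: "'a::real_normed_vector set" and T :: "real set"
  assumes cW: "closed W" and sW: "subspace W" and vW: "v \<notin> W"
    and cS: "closed S" and SW: "S \<subseteq> W" and cT: "closed T"
  shows "closed {s + t *\<^sub>R v | s t. s \<in> S \<and> t \<in> T}"
proof -
  define \<delta> where "\<delta> = infdist v W"
  have W0: "0 \<in> W" using sW by (simp add: subspace_0)
  have dpos: "\<delta> > 0"
    using in_closed_iff_infdist_zero[OF cW, of v] W0 vW infdist_nonneg[of v W]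
    unfolding \<delta>_def by force
  have key: "\<bar>t\<bar> * \<delta> \<le> norm (s + t *\<^sub>R v)" if "s \<in> W" for s t
  proof (cases "t = 0")
    case True then show ?thesis by simp
  next
    case False
    have "- ((1/t) *\<^sub>R s) \<in> W" using that sW by (simp add: subspace_neg subspace_scale)
    hence "\<delta> \<le> dist v (- ((1/t) *\<^sub>R s))" unfolding \<delta>_def by (rule infdist_le)
    also have "\<dots> = norm ((1/t) *\<^sub>R s + v)" by (simp add: dist_norm add.commute)
    finally have "\<bar>t\<bar> * \<delta> \<le> \<bar>t\<bar> * norm ((1/t) *\<^sub>R s + v)"
      by (simp add: mult_left_mono)
    also have "\<dots> = norm (t *\<^sub>R ((1/t) *\<^sub>R s + v))" by simp
    also have "t *\<^sub>R ((1/t) *\<^sub>R s + v) = s + t *\<^sub>R v" using False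
      by (simp add: scaleR_add_right)
    finally show ?thesis .
  qed
  show ?thesis unfolding closed_sequential_limits
  proof (intro allI impI, elim conjE)
    fix x l assume xin: "\<forall>n. x n \<in> {s + t *\<^sub>R v | s t. s \<in> S \<and> t \<in> T}"
      and xl: "x \<longlonglongrightarrow> l"
    have "\<forall>n. \<exists>st. x n = fst st + snd st *\<^sub>R v \<and> fst st \<in> S \<and> snd st \<in> T"
      using xin by fastforce
    then obtain st where st: "\<And>n. x n = fst (st n) + snd (st n) *\<^sub>R v \<and> fst (st n) \<in> S \<and> snd (st n) \<in> T"
      by metis
    define s where "s n = fst (st n)" for n
    define t where "t n = snd (st n)" for n
    have xe: "x n = s n + t n *\<^sub>R v" and sS: "s n \<in> S" and tT: "t n \<in> T" for n
      using st[of n] by (auto simp: s_def t_def)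
    have "Cauchy x" using xl by (rule LIMSEQ_imp_Cauchy)
    have "Cauchy t"
    proof (rule metric_CauchyI)
      fix e :: real assume "e > 0"
      then obtain M where M: "\<And>m n. m \<ge> M \<Longrightarrow> n \<ge> M \<Longrightarrow> dist (x m) (x n) < e * \<delta>"
        using \<open>Cauchy x\<close> dpos unfolding Cauchy_def by (meson mult_pos_pos)
      show "\<exists>M. \<forall>m\<ge>M. \<forall>n\<ge>M. dist (t m) (t n) < e"
      proof (intro exI allI impI)
        fix m n assume "m \<ge> M" "n \<ge> M"
        have "s m - s n \<in> W" using sS SW sW by (meson subsetD subspace_diff)
        hence "\<bar>t m - t n\<bar> * \<delta> \<le> norm ((s m - s n) + (t m - t n) *\<^sub>R v)" by (rule key)
        also have "(s m - s n) + (t m - t n) *\<^sub>R v = x m - x n"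
          by (simp add: xe algebra_simps)
        also have "norm (x m - x n) < e * \<delta>" using M[OF \<open>m \<ge> M\<close> \<open>n \<ge> M\<close>] by (simp add: dist_norm)
        finally show "dist (t m) (t n) < e" using dpos by (simp add: dist_real_def)
      qed
    qed
    then obtain t0 where t0: "t \<longlonglongrightarrow> t0" using Cauchy_convergent_iff convergent_def by blast
    have "t0 \<in> T" using cT t0 tT closed_sequential_limits by blast
    have "(\<lambda>n. x n - t n *\<^sub>R v) \<longlonglongrightarrow> l - t0 *\<^sub>R v"
      by (intro tendsto_intros xl t0)
    moreover have "(\<lambda>n. x n - t n *\<^sub>R v) = s" by (rule ext) (simp add: xe)
    ultimately have "s \<longlonglongrightarrow> l - t0 *\<^sub>R v" by simp
    hence "l - t0 *\<^sub>R v \<in> S" using cS sS closed_sequential_limits by blast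
    moreover have "l = (l - t0 *\<^sub>R v) + t0 *\<^sub>R v" by simp
    ultimately show "l \<in> {s + t *\<^sub>R v | s t. s \<in> S \<and> t \<in> T}" using \<open>t0 \<in> T\<close> by blast
  qed
qed

lemma gen_cone_empty: "gen_cone {} v = {0}"
  by (simp add: gen_cone_def)

lemma gen_cone_span: "gen_cone K v \<subseteq> span (v ` K)"
proof
  fix x assume "x \<in> gen_cone K v"
  then obtain a where x: "x = (\<Sum>i\<in>K. a i *\<^sub>R v i)" unfolding gen_cone_def by blast
  have "(\<Sum>i\<in>K. a i *\<^sub>R v i) \<in> span (v ` K)"
    by (rule span_sum, rule span_scale, rule span_base) auto
  then show "x \<in> span (v ` K)" using x by simp
qed

lemma gen_cone_insert:
  assumes "finite K" "k \<notin> K"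
  shows "gen_cone (insert k K) v = {s + t *\<^sub>R v k | s t. s \<in> gen_cone K v \<and> t \<in> {0..}}"
proof (intro set_eqI iffI)
  fix x assume "x \<in> gen_cone (insert k K) v"
  then obtain a where x: "x = (\<Sum>i\<in>insert k K. a i *\<^sub>R v i)" and a: "\<forall>i\<in>insert k K. a i \<ge> 0"
    unfolding gen_cone_def by blast
  have "x = (\<Sum>i\<in>K. a i *\<^sub>R v i) + a k *\<^sub>R v k" using x assms by (simp add: add.commute)
  moreover have "(\<Sum>i\<in>K. a i *\<^sub>R v i) \<in> gen_cone K v" using a unfolding gen_cone_def by auto
  ultimately show "x \<in> {s + t *\<^sub>R v k | s t. s \<in> gen_cone K v \<and> t \<in> {0..}}" using a by auto
next
  fix x assume "x \<in> {s + t *\<^sub>R v k | s t. s \<in> gen_cone K v \<and> t \<in> {0..}}"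
  then obtain a t where x: "x = (\<Sum>i\<in>K. a i *\<^sub>R v i) + t *\<^sub>R v k" and a: "\<forall>i\<in>K. a i \<ge> 0"
    and t: "t \<ge> 0" unfolding gen_cone_def by auto
  define b where "b = a(k := t)"
  have "(\<Sum>i\<in>insert k K. b i *\<^sub>R v i) = t *\<^sub>R v k + (\<Sum>i\<in>K. b i *\<^sub>R v i)"
    using assms by (simp add: b_def)
  also have "(\<Sum>i\<in>K. b i *\<^sub>R v i) = (\<Sum>i\<in>K. a i *\<^sub>R v i)"
    using assms by (intro sum.cong) (auto simp: b_def)
  finally have "x = (\<Sum>i\<in>insert k K. b i *\<^sub>R v i)" using x by (simp add: add.commute)
  moreover have "\<forall>i\<in>insert k K. b i \<ge> 0" using a t by (auto simp: b_def)
  ultimately show "x \<in> gen_cone (insert k K) v" unfolding gen_cone_def by blast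
qed

lemma gen_cone_closed_aux:
  fixes v :: "'i \<Rightarrow> 'a::real_normed_vector"
  assumes "finite K" "inj_on v K" "independent (v ` K)"
  shows "closed (gen_cone K v) \<and> closed (span (v ` K))"
  using assms
proof (induction K rule: finite_induct)
  case empty
  then show ?case by (simp add: gen_cone_empty)
next
  case (insert k K)
  have nin: "v k \<notin> v ` K" using insert.prems insert.hyps by auto
  have indK: "independent (v ` K)" by (rule independent_mono[OF insert.prems(2)]) auto
  have vk: "v k \<notin> span (v ` K)"
    using insert.prems(2) nin indK by (simp add: independent_insert)
  have IH: "closed (gen_cone K v)" "closed (span (v ` K))"
    using insert.IH insert.prems(1) indK by auto
  have sp: "span (v ` insert k K) = {s + t *\<^sub>R v k | s t. s \<in> span (v ` K) \<and> t \<in> UNIV}"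
  proof -
    have "span (v ` insert k K) = {x. \<exists>t. x - t *\<^sub>R v k \<in> span (v ` K)}"
      by (simp add: span_insert)
    also have "\<dots> = {s + t *\<^sub>R v k | s t. s \<in> span (v ` K) \<and> t \<in> UNIV}"
      by (auto; metis add_diff_cancel diff_add_cancel)
    finally show ?thesis .
  qed
  show ?case
    unfolding sp gen_cone_insert[OF insert.hyps]
    using closed_sum_line[OF IH(2) subspace_span vk IH(1) gen_cone_span closed_atLeast]
      closed_sum_line[OF IH(2) subspace_span vk IH(2) order_refl closed_UNIV]
    by blast
qed

lemma proj_char:
  fixes C :: "'a::real_inner set"
  assumes cv: "convex C" and pC: "p \<in> C" and near: "\<forall>y\<in>C. dist x p \<le> dist x y"
    and yC: "y \<in> C"
  shows "inner (x - p) (y - p) \<le> 0"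
proof (rule ccontr)
  assume "\<not> ?thesis"
  hence a: "inner (x - p) (y - p) > 0" by simp
  hence yp: "y \<noteq> p" by auto
  define N where "N = inner (y - p) (y - p)"
  have Npos: "N > 0" using yp by (simp add: N_def)
  define s where "s = min 1 (inner (x - p) (y - p) / N)"
  have s0: "s > 0" using a Npos by (simp add: s_def)
  have s1: "s \<le> 1" by (simp add: s_def)
  have sN: "s * N \<le> inner (x - p) (y - p)"
    using Npos by (simp add: s_def min_def field_simps)
  have "p + s *\<^sub>R (y - p) \<in> C"
  proof -
    have "(1 - s) *\<^sub>R p + s *\<^sub>R y \<in> C" using cv pC yC s0 s1 by (simp add: convex_def)
    moreover have "(1 - s) *\<^sub>R p + s *\<^sub>R y = p + s *\<^sub>R (y - p)" by (simp add: algebra_simps)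
    ultimately show ?thesis by simp
  qed
  hence "dist x p \<le> dist x (p + s *\<^sub>R (y - p))" using near by blast
  hence "norm (x - p) \<le> norm ((x - p) - s *\<^sub>R (y - p))" by (simp add: dist_norm algebra_simps)
  hence "(norm (x - p))\<^sup>2 \<le> (norm ((x - p) - s *\<^sub>R (y - p)))\<^sup>2"
    by (simp add: power_mono)
  hence "inner (x - p) (x - p) \<le> inner ((x - p) - s *\<^sub>R (y - p)) ((x - p) - s *\<^sub>R (y - p))"
    by (simp add: power2_norm_eq_inner)
  also have "\<dots> = inner (x - p) (x - p) - 2 * s * inner (x - p) (y - p) + s * s * N"
    by (simp add: N_def inner_diff_left inner_diff_right inner_commute algebra_simps)
  finally have "2 * s * inner (x - p) (y - p) \<le> s * (s * N)" by (simp add: algebra_simps)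
  hence "2 * inner (x - p) (y - p) \<le> s * N" using s0 by (simp add: mult.assoc)
  thus False using sN a by linarith
qed

lemma aux_two: "2 * (a::real) * (q + q) = 4 * a * q" by (simp add: algebra_simps)

lemma proj_exists:
  fixes C :: "'a::{real_inner,complete_space} set"
  assumes cl: "closed C" and cv: "convex C" and ne: "C \<noteq> {}"
  shows "\<exists>p\<in>C. \<forall>y\<in>C. dist x p \<le> dist x y"
proof -
  define \<delta> where "\<delta> = infdist x C"
  have d0: "\<delta> \<ge> 0" by (simp add: \<delta>_def infdist_nonneg)
  have ex: "\<exists>p\<in>C. dist x p < \<delta> + e" if "e > 0" for e
  proof (rule ccontr)
    assume "\<not> ?thesis"
    hence "\<forall>p\<in>C. \<delta> + e \<le> dist x p" by auto
    hence "\<delta> + e \<le> (INF a\<in>C. dist x a)" using ne by (intro cINF_greatest) auto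
    thus False using that by (simp add: \<delta>_def infdist_notempty[OF ne])
  qed
  have "\<forall>n. \<exists>p\<in>C. dist x p < \<delta> + 1 / (real n + 1)" using ex by simp
  then obtain P where PC: "\<And>n. P n \<in> C" and Pd: "\<And>n. dist x (P n) < \<delta> + 1 / (real n + 1)"
    by metis
  have lowb: "\<delta> \<le> dist x y" if "y \<in> C" for y using that by (simp add: \<delta>_def infdist_le)
  have sq: "(dist x (P n))\<^sup>2 \<le> \<delta>\<^sup>2 + (2 * \<delta> + 1) * (1 / (real n + 1))" for n
  proof -
    define e where "e = 1 / (real n + 1)"
    have e0: "0 < e" "e \<le> 1" by (auto simp: e_def)
    have "dist x (P n) \<le> \<delta> + e" using Pd[of n] by (simp add: e_def)
    hence "(dist x (P n))\<^sup>2 \<le> (\<delta> + e)\<^sup>2" by (simp add: power_mono)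
    also have "\<dots> = \<delta>\<^sup>2 + (2 * \<delta> + e) * e" by (simp add: power2_eq_square algebra_simps)
    also have "\<dots> \<le> \<delta>\<^sup>2 + (2 * \<delta> + 1) * e" using e0 d0 by (intro add_left_mono mult_right_mono) auto
    finally show ?thesis by (simp add: e_def)
  qed
  have par: "(norm (P m - P n))\<^sup>2 \<le> 2 * (2 * \<delta> + 1) * (1 / (real m + 1) + 1 / (real n + 1))" for m n
  proof -
    have mid: "(1/2) *\<^sub>R (P m + P n) \<in> C"
    proof -
      have "(1 - 1/2) *\<^sub>R P m + (1/2) *\<^sub>R P n \<in> C" using cv PC by (simp add: convex_def)
      thus ?thesis by (simp add: scaleR_add_right)
    qed
    have "\<delta> \<le> dist x ((1/2) *\<^sub>R (P m + P n))" using lowb[OF mid] .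
    also have "\<dots> = norm ((1/2) *\<^sub>R ((x - P m) + (x - P n)))"
    proof -
      have "(1/2) *\<^sub>R ((x - P m) + (x - P n)) = (1/2) *\<^sub>R (2 *\<^sub>R x) - (1/2) *\<^sub>R (P m + P n)"
        by (simp add: scaleR_2 algebra_simps)
      also have "\<dots> = x - (1/2) *\<^sub>R (P m + P n)" by simp
      finally show ?thesis by (simp add: dist_norm)
    qed
    also have "\<dots> = (1/2) * norm ((x - P m) + (x - P n))" by simp
    finally have h: "2 * \<delta> \<le> norm ((x - P m) + (x - P n))" by simp
    hence "(2 * \<delta>)\<^sup>2 \<le> (norm ((x - P m) + (x - P n)))\<^sup>2" using d0 by (intro power_mono) auto
    have pl: "(norm ((x - P m) - (x - P n)))\<^sup>2 + (norm ((x - P m) + (x - P n)))\<^sup>2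
       = 2 * (norm (x - P m))\<^sup>2 + 2 * (norm (x - P n))\<^sup>2"
      by (simp add: power2_norm_eq_inner inner_diff_left inner_diff_right inner_add_left inner_add_right inner_commute algebra_simps)
    have "(norm (P m - P n))\<^sup>2 = (norm ((x - P m) - (x - P n)))\<^sup>2"
      by (simp add: norm_minus_commute)
    also have "\<dots> \<le> 2 * (dist x (P m))\<^sup>2 + 2 * (dist x (P n))\<^sup>2 - (2 * \<delta>)\<^sup>2"
      using pl \<open>(2 * \<delta>)\<^sup>2 \<le> _\<close> by (simp add: dist_norm)
    also have "\<dots> \<le> 2 * (\<delta>\<^sup>2 + (2 * \<delta> + 1) * (1 / (real m + 1))) + 2 * (\<delta>\<^sup>2 + (2 * \<delta> + 1) * (1 / (real n + 1))) - (2 * \<delta>)\<^sup>2"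
      using sq[of m] sq[of n] by (intro diff_right_mono add_mono mult_left_mono) auto
    also have "\<dots> = 2 * (2 * \<delta> + 1) * (1 / (real m + 1) + 1 / (real n + 1))"
      by (simp add: power2_eq_square algebra_simps)
    finally show ?thesis .
  qed
  have "Cauchy P"
  proof (rule metric_CauchyI)
    fix e :: real assume e: "e > 0"
    obtain M :: nat where M: "4 * (2 * \<delta> + 1) / e\<^sup>2 < real M" using reals_Archimedean2 by blast
    show "\<exists>M. \<forall>m\<ge>M. \<forall>n\<ge>M. dist (P m) (P n) < e"
    proof (intro exI allI impI)
      fix m n assume mM: "m \<ge> M" and nM: "n \<ge> M"
      have e2: "e\<^sup>2 > 0" using e by simp
      have Mpos: "real M + 1 > 0" by simp
      have h1: "1 / (real m + 1) \<le> 1 / (real M + 1)" using mM by (intro divide_left_mono) auto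
      have h2: "1 / (real n + 1) \<le> 1 / (real M + 1)" using nM by (intro divide_left_mono) auto
      have "(norm (P m - P n))\<^sup>2 \<le> 2 * (2 * \<delta> + 1) * (1 / (real M + 1) + 1 / (real M + 1))"
        by (rule order_trans[OF par[of m n] mult_left_mono[OF add_mono[OF h1 h2]]]) (use d0 in simp)
      also have "\<dots> = 4 * (2 * \<delta> + 1) * (1 / (real M + 1))" by (rule aux_two)
      also have "\<dots> < e\<^sup>2"
      proof -
        have "4 * (2 * \<delta> + 1) < real M * e\<^sup>2" using M e2 by (simp add: pos_divide_less_eq)
        moreover have "real M * e\<^sup>2 < (real M + 1) * e\<^sup>2" using e2 by simp
        ultimately have "4 * (2 * \<delta> + 1) < (real M + 1) * e\<^sup>2" by linarith
        hence "4 * (2 * \<delta> + 1) * (1 / (real M + 1)) < ((real M + 1) * e\<^sup>2) * (1 / (real M + 1))"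
          using Mpos by (intro mult_strict_right_mono) auto
        also have "\<dots> = e\<^sup>2" using Mpos by simp
        finally show ?thesis .
      qed
      finally have "(norm (P m - P n))\<^sup>2 < e\<^sup>2" .
      hence "norm (P m - P n) < e" by (rule power_less_imp_less_base[OF _ less_imp_le[OF e]])
      thus "dist (P m) (P n) < e" by (simp add: dist_norm)
    qed
  qed
  then obtain p where Pp: "P \<longlonglongrightarrow> p" using Cauchy_convergent_iff convergent_def by blast
  have pC: "p \<in> C" using cl PC Pp closed_sequential_limits by blast
  have t1: "(\<lambda>n. dist x (P n)) \<longlonglongrightarrow> dist x p" by (intro tendsto_intros Pp)
  have t2: "(\<lambda>n. dist x (P n)) \<longlonglongrightarrow> \<delta>"
  proof (rule real_tendsto_sandwich[of "\<lambda>n. \<delta>" _ _ "\<lambda>n. \<delta> + 1 / (real n + 1)"])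
    show "\<forall>\<^sub>F n in sequentially. \<delta> \<le> dist x (P n)" by (intro always_eventually allI lowb PC)
    show "\<forall>\<^sub>F n in sequentially. dist x (P n) \<le> \<delta> + 1 / (real n + 1)"
      by (intro always_eventually allI less_imp_le Pd)
    show "(\<lambda>n. \<delta>) \<longlonglongrightarrow> \<delta>" by (rule tendsto_const)
    have "(\<lambda>n. \<delta> + inverse (real (Suc n))) = (\<lambda>n. \<delta> + 1 / (real n + 1))"
      by (rule ext) (simp add: inverse_eq_divide)
    thus "(\<lambda>n. \<delta> + 1 / (real n + 1)) \<longlonglongrightarrow> \<delta>"
      using LIMSEQ_inverse_real_of_nat_add[of \<delta>] by simp
  qed
  have "dist x p = \<delta>" using LIMSEQ_unique[OF t1 t2] .
  thus ?thesis using pC lowb by auto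
qed

lemma metric_proj_props:
  fixes C :: "'a::{real_inner,complete_space} set"
  assumes cl: "closed C" and cv: "convex C" and ne: "C \<noteq> {}"
  shows "metric_proj C x \<in> C \<and> (\<forall>y\<in>C. inner (x - metric_proj C x) (y - metric_proj C x) \<le> 0)"
proof -
  obtain p where pC: "p \<in> C" and pn: "\<forall>y\<in>C. dist x p \<le> dist x y"
    using proj_exists[OF cl cv ne] by blast
  have "metric_proj C x = p" unfolding metric_proj_def
  proof (rule the_equality)
    show "p \<in> C \<and> (\<forall>y\<in>C. dist x p \<le> dist x y)" using pC pn by blast
  next
    fix q assume q: "q \<in> C \<and> (\<forall>y\<in>C. dist x q \<le> dist x y)"
    have a: "inner (x - p) (q - p) \<le> 0" using proj_char[OF cv pC pn] q by blast
    have b: "inner (x - q) (p - q) \<le> 0" using proj_char[OF cv, of q x p] q pC by blast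
    have "inner (q - p) (q - p) = inner (x - p) (q - p) + inner (x - q) (p - q)"
      by (simp add: inner_diff_left inner_diff_right inner_commute algebra_simps)
    hence "inner (q - p) (q - p) \<le> 0" using a b by linarith
    thus "q = p" by (metis inner_gt_zero_iff eq_iff_diff_eq_0 not_le)
  qed
  thus ?thesis using pC proj_char[OF cv pC pn] by simp
qed

lemma gen_cone_0: "0 \<in> gen_cone K v"
  unfolding gen_cone_def by (rule CollectI, rule exI[of _ "\<lambda>i. 0"]) simp

lemma gen_cone_scale: "c \<in> gen_cone K v \<Longrightarrow> (r::real) \<ge> 0 \<Longrightarrow> r *\<^sub>R c \<in> gen_cone K v"
  unfolding gen_cone_def
proof (elim CollectE exE conjE, intro CollectI)
  fix a assume c: "c = (\<Sum>i\<in>K. a i *\<^sub>R v i)" and a: "\<forall>i\<in>K. 0 \<le> a i" and r: "r \<ge> 0"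
  show "\<exists>b. r *\<^sub>R c = (\<Sum>i\<in>K. b i *\<^sub>R v i) \<and> (\<forall>i\<in>K. 0 \<le> b i)"
    by (rule exI[of _ "\<lambda>i. r * a i"]) (simp add: c a r scaleR_sum_right)
qed

lemma gen_cone_add: "c \<in> gen_cone K v \<Longrightarrow> c' \<in> gen_cone K v \<Longrightarrow> c + c' \<in> gen_cone K v"
  unfolding gen_cone_def
proof (elim CollectE exE conjE, intro CollectI)
  fix a b assume c: "c = (\<Sum>i\<in>K. a i *\<^sub>R v i)" and a: "\<forall>i\<in>K. 0 \<le> a i"
    and c': "c' = (\<Sum>i\<in>K. b i *\<^sub>R v i)" and b: "\<forall>i\<in>K. 0 \<le> b i"
  show "\<exists>e. c + c' = (\<Sum>i\<in>K. e i *\<^sub>R v i) \<and> (\<forall>i\<in>K. 0 \<le> e i)"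
    by (rule exI[of _ "\<lambda>i. a i + b i"]) (simp add: c c' a b scaleR_add_left sum.distrib)
qed

lemma gen_cone_convex: "convex (gen_cone K v)"
  unfolding convex_def
  by (intro ballI allI impI gen_cone_add gen_cone_scale) auto

theorem lemma5:
  fixes I :: "'i set"
    and J :: "'a::{real_inner,complete_space} \<Rightarrow> real" and dJ :: "'a \<Rightarrow> 'a"
    and g :: "'i \<Rightarrow> 'a \<Rightarrow> real" and dg :: "'i \<Rightarrow> 'a \<Rightarrow> 'a"
    and c :: "'i \<Rightarrow> real \<Rightarrow> real" and u :: 'a
  assumes finI: "finite I"
    and J_grad: "\<And>v. (J has_derivative (\<lambda>h. inner (dJ v) h)) (at v)"
    and J_C1: "continuous_on UNIV dJ"
    and g_grad: "\<And>i v. i \<in> I \<Longrightarrow> (g i has_derivative (\<lambda>h. inner (dg i v) h)) (at v)"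
    and g_C1: "\<And>i. i \<in> I \<Longrightarrow> continuous_on UNIV (dg i)"
    and LICQ: "\<And>v. v \<in> feasible_set I g \<Longrightarrow> active_set I g v \<noteq> {} \<Longrightarrow>
                 inj_on (\<lambda>i. dg i v) (active_set I g v) \<and>
                 independent ((\<lambda>i. dg i v) ` active_set I g v)"
    and u_feas: "u \<in> feasible_set I g"
    and not_KKT: "\<not> is_KKT I dJ g dg u"
    and c_feas: "\<forall>\<^sub>F t in at_right 0.
        u + t *\<^sub>R dir_W I dJ g dg u + (\<Sum>i\<in>weak_active_set I dJ g dg u. c i t *\<^sub>R dg i u)
          \<in> feasible_set I g"
    and c_active: "\<forall>\<^sub>F t in at_right 0. \<forall>i\<in>weak_active_set I dJ g dg u.
        g i (u + t *\<^sub>R dir_W I dJ g dg u + (\<Sum>j\<in>weak_active_set I dJ g dg u. c j t *\<^sub>R dg j u)) = 0"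
    and c_small: "\<And>i. i \<in> weak_active_set I dJ g dg u \<Longrightarrow> c i \<in> o[at_right 0](\<lambda>t. t)"
    and c_sum_small: "(\<lambda>t. norm (\<Sum>i\<in>weak_active_set I dJ g dg u. c i t *\<^sub>R dg i u))
                        \<in> o[at_right 0](\<lambda>t. t)"
  shows "\<exists>t0>0. \<forall>t. 0 < t \<and> t < t0 \<longrightarrow>
           J (u + t *\<^sub>R dir_W I dJ g dg u + (\<Sum>i\<in>weak_active_set I dJ g dg u. c i t *\<^sub>R dg i u)) - J u
             < - (t / 2) * (norm (dir_W I dJ g dg u))\<^sup>2"
proof -
  define K where "K = weak_active_set I dJ g dg u"
  define A where "A = active_set I g u"
  define V where "V = (\<lambda>i. dg i u)"
  define C where "C = gen_cone K V"
  define x where "x = - dJ u"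
  define p where "p = metric_proj C x"
  define d where "d = dir_W I dJ g dg u"
  have KA: "K \<subseteq> A" by (auto simp: K_def A_def weak_active_set_def)
  have AI: "A \<subseteq> I" by (auto simp: A_def active_set_def)
  have finK: "finite K" using finI KA AI finite_subset by blast
  have dxp: "d = x - p" by (simp add: d_def dir_W_def x_def p_def C_def K_def V_def)
  have clC: "closed C"
  proof (cases "K = {}")
    case True then show ?thesis by (simp add: C_def gen_cone_empty)
  next
    case False
    hence "A \<noteq> {}" using KA by blast
    hence L: "inj_on V A \<and> independent (V ` A)" using LICQ[OF u_feas] by (simp add: A_def V_def)
    have "inj_on V K" using L KA inj_on_subset by blast
    moreover have "independent (V ` K)" using L KA by (meson image_mono independent_mono)
    ultimately show ?thesis unfolding C_def using gen_cone_closed_aux[OF finK, of V] by blast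
  qed
  have PP: "p \<in> C \<and> (\<forall>y\<in>C. inner (x - p) (y - p) \<le> 0)"
  proof -
    have ne: "C \<noteq> {}" using gen_cone_0[of K V] by (auto simp: C_def)
    have cv: "convex C" by (simp add: C_def gen_cone_convex)
    show ?thesis unfolding p_def by (rule metric_proj_props[OF clC cv ne])
  qed
  have pC: "p \<in> C" using PP by blast
  have "0 \<in> C" by (simp add: C_def gen_cone_0)
  hence i1: "inner (x - p) (0 - p) \<le> 0" using PP by blast
  have "inner (x - p) (2 *\<^sub>R p - p) \<le> 0" using PP gen_cone_scale[of p K V 2] pC unfolding C_def by simp
  hence "inner (x - p) p = 0" using i1 by (simp add: scaleR_2 inner_diff_right)
  hence dp: "inner d p = 0" by (simp add: dxp)
  have dJd: "inner (dJ u) d = - (norm d)\<^sup>2"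
  proof -
    have "dJ u = - (d + p)" by (simp add: dxp x_def)
    hence "inner (dJ u) d = - (inner d d + inner p d)" by (simp add: inner_add_left inner_diff_left)
    thus ?thesis using dp by (simp add: inner_commute power2_norm_eq_inner)
  qed
  have dnz: "d \<noteq> 0"
  proof
    assume "d = 0"
    hence "x \<in> C" using pC dxp by simp
    then obtain a where xa: "x = (\<Sum>i\<in>K. a i *\<^sub>R V i)" and a: "\<forall>i\<in>K. a i \<ge> 0"
      unfolding C_def gen_cone_def by blast
    define \<mu> where "\<mu> i = (if i \<in> K then a i else 0)" for i
    have "\<forall>i\<in>I. \<mu> i \<ge> 0 \<and> \<mu> i * g i u = 0"
      using a KA by (auto simp: \<mu>_def A_def active_set_def)
    moreover have "- dJ u = (\<Sum>i\<in>I. \<mu> i *\<^sub>R dg i u)"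
    proof -
      have "(\<Sum>i\<in>I. \<mu> i *\<^sub>R dg i u) = (\<Sum>i\<in>K. \<mu> i *\<^sub>R dg i u)"
        using KA AI finI by (intro sum.mono_neutral_right) (auto simp: \<mu>_def)
      also have "\<dots> = (\<Sum>i\<in>K. a i *\<^sub>R V i)" by (intro sum.cong) (auto simp: \<mu>_def V_def)
      finally show ?thesis using xa x_def by simp
    qed
    ultimately have "is_KKT I dJ g dg u" using u_feas unfolding is_KKT_def by blast
    thus False using not_KKT by blast
  qed
  define D where "D = (norm d)\<^sup>2"
  have Dpos: "D > 0" using dnz by (simp add: D_def)
  define nd where "nd = norm d"
  define nJ where "nJ = norm (dJ u)"
  define \<eta> where "\<eta> = min 1 (D / (4 * (nJ + 1)))"
  define \<epsilon> where "\<epsilon> = D / (8 * (nd + 1))"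
  have nd0: "nd \<ge> 0" and nJ0: "nJ \<ge> 0" by (auto simp: nd_def nJ_def)
  have eta0: "\<eta> > 0" using Dpos nJ0 by (simp add: \<eta>_def)
  have eta1: "\<eta> \<le> 1" by (simp add: \<eta>_def)
  have etaJ: "nJ * \<eta> \<le> D / 4"
  proof -
    have "nJ * \<eta> \<le> nJ * (D / (4 * (nJ + 1)))" using nJ0 by (intro mult_left_mono) (auto simp: \<eta>_def)
    also have "\<dots> = (D / 4) * (nJ / (nJ + 1))" using nJ0 by (simp add: field_simps)
    also have "\<dots> \<le> (D / 4) * 1" using nJ0 Dpos by (intro mult_left_mono) auto
    finally show ?thesis by simp
  qed
  have eps0: "\<epsilon> > 0" using Dpos nd0 by (simp add: \<epsilon>_def)
  have epsd: "\<epsilon> * (nd + 1) = D / 8"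
  proof -
    have "\<epsilon> * (nd + 1) = (D * (nd + 1)) / (8 * (nd + 1))" by (simp add: \<epsilon>_def)
    also have "\<dots> = D / 8" using nd0 by (intro nonzero_mult_divide_mult_cancel_right) linarith
    finally show ?thesis .
  qed
  obtain r where r0: "r > 0" and rJ: "\<And>z. norm (z - u) < r \<Longrightarrow>
      norm (J z - J u - inner (dJ u) (z - u)) \<le> \<epsilon> * norm (z - u)"
    using J_grad[of u] eps0 unfolding has_derivative_at_alt by blast
  define w where "w t = (\<Sum>i\<in>K. c i t *\<^sub>R dg i u)" for t
  have ev: "\<forall>\<^sub>F t in at_right 0. norm (w t) \<le> \<eta> * t"
  proof -
    have "\<forall>\<^sub>F t in at_right 0. norm (norm (w t)) \<le> \<eta> * norm t"
      using landau_o.smallD[OF c_sum_small eta0] by (simp add: w_def K_def)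
    moreover have "\<forall>\<^sub>F t in at_right (0::real). t > 0" by (simp add: eventually_at_right_less)
    ultimately show ?thesis by eventually_elim simp
  qed
  then obtain b where b0: "b > 0" and bw: "\<And>t. t > 0 \<Longrightarrow> t < b \<Longrightarrow> norm (w t) \<le> \<eta> * t"
    unfolding eventually_at_right_field by auto
  define t0 where "t0 = min b (r / (nd + 1))"
  have t00: "t0 > 0" using b0 r0 nd0 by (simp add: t0_def)
  show ?thesis
  proof (intro exI[of _ t0] conjI allI impI)
    show "t0 > 0" by (rule t00)
    fix t :: real assume tt: "0 < t \<and> t < t0"
    hence t0': "t > 0" "t < b" "t < r / (nd + 1)" by (auto simp: t0_def)
    have wt: "norm (w t) \<le> \<eta> * t" using bw t0' by blast
    define z where "z = u + t *\<^sub>R d + w t"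
    have zu: "z - u = t *\<^sub>R d + w t" by (simp add: z_def)
    have nz: "norm (z - u) \<le> t * (nd + 1)"
    proof -
      have "norm (z - u) \<le> norm (t *\<^sub>R d) + norm (w t)" unfolding zu by (rule norm_triangle_ineq)
      also have "\<dots> \<le> t * nd + \<eta> * t" using wt t0' by (simp add: nd_def)
      also have "\<dots> \<le> t * nd + 1 * t" using eta1 t0' by (intro add_left_mono mult_right_mono) auto
      finally show ?thesis by (simp add: algebra_simps)
    qed
    have "t * (nd + 1) < r" using t0' nd0 by (simp add: pos_less_divide_eq)
    hence err: "norm (J z - J u - inner (dJ u) (z - u)) \<le> \<epsilon> * norm (z - u)"
      using nz by (intro rJ) linarith
    have err2: "\<epsilon> * norm (z - u) \<le> t * (D / 8)"
    proof -
      have "\<epsilon> * norm (z - u) \<le> \<epsilon> * (t * (nd + 1))" using eps0 nz by (intro mult_left_mono) auto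
      also have "\<dots> = t * (\<epsilon> * (nd + 1))" by simp
      finally show ?thesis using epsd by simp
    qed
    have lin: "inner (dJ u) (z - u) = - t * D + inner (dJ u) (w t)"
      using dJd by (simp add: zu inner_add_right D_def)
    have "\<bar>inner (dJ u) (w t)\<bar> \<le> nJ * norm (w t)" unfolding nJ_def by (rule Cauchy_Schwarz_ineq2)
    also have "\<dots> \<le> nJ * (\<eta> * t)" using wt nJ0 by (intro mult_left_mono) auto
    also have "\<dots> = t * (nJ * \<eta>)" by simp
    also have "\<dots> \<le> t * (D / 4)" using etaJ t0' by (intro mult_left_mono) auto
    finally have lin2: "\<bar>inner (dJ u) (w t)\<bar> \<le> t * (D / 4)" .
    have "J z - J u \<le> inner (dJ u) (z - u) + t * (D / 8)"
      using err err2 abs_le_D1[of "J z - J u - inner (dJ u) (z - u)"] by simp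
    hence "J z - J u \<le> - t * D + t * (D / 4) + t * (D / 8)" using lin lin2 by linarith
    moreover have "- t * D + t * (D / 4) + t * (D / 8) < - (t / 2) * D" using t0' Dpos
      by (simp add: algebra_simps)
    ultimately have "J z - J u < - (t / 2) * D" by linarith
    thus "J (u + t *\<^sub>R dir_W I dJ g dg u + (\<Sum>i\<in>weak_active_set I dJ g dg u. c i t *\<^sub>R dg i u)) - J u
             < - (t / 2) * (norm (dir_W I dJ g dg u))\<^sup>2"
      by (simp add: z_def d_def w_def K_def D_def)
  qed
qed

end
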